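(* Let $\sum_{n=1}^{\infty}x_n$ be a conditionally convergent series of real numbers. Then for any $a,b\in\mathbb{R}$ with $a<b$ there exists a strictly increasing sequence of indices $(k_n)_{n=1}^{\infty}$ such that the subseries $\sum_{n=1}^{\infty}x_{k_n}$ is absolutely convergent and its achievement set $A(x_{k_n})$ contains the interval $[a,b]$.
   Context: For a real sequence $(y_n)$, its achievement set is $A(y_n)=\{\sum_{n\in A}y_n : A\subseteq\mathbb{N}\}$ (only sets $A$ for which the sum converges are taken; for an absolutely convergent series this is every $A$). *)

theory Defs
  imports "HOL-Analysis.Analysis"
begin

definition achievement_set :: "(nat \<Rightarrow> real) \<Rightarrow> real set" where
  "achievement_set y = {s. \<exists>A :: nat set. (\<lambda>n. if n \<in> A then y n else 0) sums s}"

definition conditionally_convergent :: "(nat \<Rightarrow> real) \<Rightarrow> bool" where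
  "conditionally_convergent x \<longleftrightarrow> summable x \<and> \<not> summable (\<lambda>n. \<bar>x n\<bar>)"

end

theory Submission
  imports Defs
begin

fun gs :: "(nat\<Rightarrow>real) \<Rightarrow> real \<Rightarrow> nat \<Rightarrow> real" where
  "gs z t 0 = 0"
| "gs z t (Suc n) = (if gs z t n + z n \<le> t then gs z t n + z n else gs z t n)"

lemma greedy:
  fixes z :: "nat \<Rightarrow> real"
  assumes z0: "\<And>n. 0 \<le> z n" and sz: "summable z"
    and K: "\<And>n. z n \<le> (\<Sum>m. z (m + Suc n))" and t0: "0 \<le> t" and tS: "t \<le> suminf z"
  shows "\<exists>B. (\<lambda>n. if n \<in> B then z n else 0) sums t"
proof -
  define B where "B = {n. gs z t n + z n \<le> t}"
  have ps: "(\<Sum>i<n. if i\<in>B then z i else 0) = gs z t n" for n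
    by (induction n) (auto simp: B_def)
  have le: "gs z t n \<le> t" for n
    by (induction n) (auto simp: t0)
  define R where "R n = suminf z - (\<Sum>i<n. z i)" for n
  have K': "z n \<le> R (Suc n)" for n
    using K[of n] suminf_minus_initial_segment[OF sz, of "Suc n"] by (simp only: R_def)
  have inv: "t - gs z t n \<le> R n" for n
  proof (induction n)
    case 0 then show ?case using tS by (simp add: R_def)
  next
    case (Suc n)
    have "R (Suc n) = R n - z n" by (simp add: R_def)
    then show ?case using Suc K'[of n] by auto
  qed
  have R0: "R \<longlonglongrightarrow> 0"
  proof -
    have "(\<lambda>n. suminf z - (\<Sum>i<n. z i)) \<longlonglongrightarrow> suminf z - suminf z"
      by (intro tendsto_intros summable_LIMSEQ sz)
    then show ?thesis by (simp add: R_def[abs_def])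
  qed
  have l1: "(\<lambda>n. t - R n) \<longlonglongrightarrow> t" using tendsto_diff[OF tendsto_const R0, of t] by simp
  have "(\<lambda>n. gs z t n) \<longlonglongrightarrow> t"
    apply (rule tendsto_sandwich[OF _ _ l1 tendsto_const])
    using le inv by (auto intro: always_eventually simp: algebra_simps)
  then have "(\<lambda>n. if n \<in> B then z n else 0) sums t" unfolding sums_def ps by simp
  then show ?thesis by blast
qed

lemma signdec:
  fixes y :: "nat \<Rightarrow> real"
  assumes K: "\<And>n. \<bar>y n\<bar> \<le> (\<Sum>m. \<bar>y (m + Suc n)\<bar>)"
    and sP: "(\<lambda>n. max (y n) 0) sums P" and sQ: "(\<lambda>n. min (y n) 0) sums (-Q)"
    and t1: "-Q \<le> t" and t2: "t \<le> P"
  shows "t \<in> achievement_set y"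
proof -
  have "(\<lambda>n. max (y n) 0 - min (y n) 0) sums (P - (-Q))" by (rule sums_diff[OF sP sQ])
  moreover have "(\<lambda>n. max (y n) 0 - min (y n) 0) = (\<lambda>n. \<bar>y n\<bar>)" by (auto simp: fun_eq_iff)
  ultimately have sa: "(\<lambda>n. \<bar>y n\<bar>) sums (P + Q)" by simp
  obtain B where B: "(\<lambda>n. if n \<in> B then \<bar>y n\<bar> else 0) sums (t + Q)"
    using greedy[of "\<lambda>n. \<bar>y n\<bar>" "t + Q"] sa K t1 t2 by (auto simp: sums_iff)
  define A where "A = {n. (0 \<le> y n \<and> n \<in> B) \<or> (y n < 0 \<and> n \<notin> B)}"
  have "(\<lambda>n. (if n \<in> B then \<bar>y n\<bar> else 0) + min (y n) 0) sums (t + Q + - Q)"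
    by (rule sums_add[OF B sQ])
  moreover have "(\<lambda>n. (if n \<in> B then \<bar>y n\<bar> else 0) + min (y n) 0) = (\<lambda>n. if n \<in> A then y n else 0)"
    by (auto simp: fun_eq_iff A_def)
  ultimately have "(\<lambda>n. if n \<in> A then y n else 0) sums t" by simp
  then show ?thesis unfolding achievement_set_def by blast
qed


lemma sub_bound:
  fixes f :: "nat \<Rightarrow> real" and k :: "nat \<Rightarrow> nat"
  assumes sm: "strict_mono k" and f0: "\<And>i. 0 \<le> f i"
    and rg: "\<And>i. M \<le> i \<Longrightarrow> f i \<noteq> 0 \<Longrightarrow> i \<in> range k"
    and bd: "\<And>N. (\<Sum>n<N. f (k n)) \<le> B"
  shows "summable f"
proof (rule bounded_imp_summable[OF f0])
  fix n
  have sub: "{..n} \<subseteq> {..<M} \<union> (k ` {..n} \<union> {i. f i = 0})"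
  proof
    fix i assume i: "i \<in> {..n}"
    show "i \<in> {..<M} \<union> (k ` {..n} \<union> {i. f i = 0})"
    proof (cases "i < M \<or> f i = 0")
      case True then show ?thesis by auto
    next
      case False
      then obtain m where m: "i = k m" using rg[of i] by force
      have "m \<le> k m" using sm by (rule seq_suble)
      then show ?thesis using m i by auto
    qed
  qed
  have "(\<Sum>i\<le>n. f i) = (\<Sum>i\<in>{..n} - {i. f i = 0}. f i)"
    by (rule sum.mono_neutral_right) auto
  also have "\<dots> \<le> (\<Sum>i\<in>{..<M} \<union> k ` {..n}. f i)"
    by (rule sum_mono2) (use sub f0 in auto)
  also have "\<dots> \<le> (\<Sum>i<M. f i) + (\<Sum>i\<in>k ` {..n}. f i)"
    using sum_Un[of "{..<M}" "k ` {..n}" f] sum_nonneg[of "{..<M} \<inter> k ` {..n}" f] f0 by simp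
  also have "(\<Sum>i\<in>k ` {..n}. f i) = (\<Sum>m<Suc n. f (k m))"
    using strict_mono_imp_inj_on[OF sm] by (simp add: sum.reindex lessThan_Suc_atMost inj_on_subset)
  also have "\<dots> \<le> B" by (rule bd)
  finally show "(\<Sum>i\<le>n. f i) \<le> (\<Sum>i<M. f i) + B" by simp
qed


context
  fixes x :: "nat \<Rightarrow> real"
  assumes cc: "conditionally_convergent x"
begin

lemma x_sum: "summable x" and nsx: "\<not> summable (\<lambda>n. \<bar>x n\<bar>)"
  using cc by (auto simp: conditionally_convergent_def)

lemma x_small: "e > 0 \<Longrightarrow> \<exists>M. \<forall>i\<ge>M. \<bar>x i\<bar> < e"
proof -
  assume e: "e > 0"
  have "x \<longlonglongrightarrow> 0" by (rule summable_LIMSEQ_zero[OF x_sum])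
  then have "eventually (\<lambda>i. \<bar>x i\<bar> < e) sequentially"
    using e by (simp add: LIMSEQ_iff eventually_sequentially)
  then show ?thesis by (simp add: eventually_sequentially)
qed

lemma ex_pos: assumes e: "e > 0" shows "\<exists>i\<ge>j. 0 < x i \<and> x i \<le> e"
proof (rule ccontr)
  assume C: "\<not> ?thesis"
  obtain M where M: "\<forall>i\<ge>M. \<bar>x i\<bar> < e" using x_small[OF e] by blast
  have "\<forall>i\<ge>max j M. \<bar>x i\<bar> = - x i"
  proof (intro allI impI)
    fix i assume "max j M \<le> i"
    then have "\<bar>x i\<bar> < e" "\<not> (0 < x i \<and> x i \<le> e)" using M C by auto
    then show "\<bar>x i\<bar> = - x i" by auto
  qed
  then have "summable (\<lambda>n. \<bar>x n\<bar>) = summable (\<lambda>n. - x n)"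
    by (intro summable_cong, unfold eventually_sequentially) blast
  then show False using nsx summable_minus[OF x_sum] by simp
qed

lemma ex_neg: assumes e: "e > 0" shows "\<exists>i\<ge>j. x i < 0 \<and> - x i \<le> e"
proof (rule ccontr)
  assume C: "\<not> ?thesis"
  obtain M where M: "\<forall>i\<ge>M. \<bar>x i\<bar> < e" using x_small[OF e] by blast
  have "\<forall>i\<ge>max j M. \<bar>x i\<bar> = x i"
  proof (intro allI impI)
    fix i assume "max j M \<le> i"
    then have "\<bar>x i\<bar> < e" "\<not> (x i < 0 \<and> - x i \<le> e)" using M C by auto
    then show "\<bar>x i\<bar> = x i" by auto
  qed
  then have "summable (\<lambda>n. \<bar>x n\<bar>) = summable (\<lambda>n. x n)"
    by (intro summable_cong, unfold eventually_sequentially) blast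
  then show False using nsx x_sum by simp
qed

definition ok :: "real \<Rightarrow> real \<Rightarrow> nat \<Rightarrow> bool" where
  "ok p q i \<longleftrightarrow> (0 < x i \<and> x i \<le> p/2) \<or> (x i < 0 \<and> - x i \<le> q/2)"

definition nxt :: "real \<Rightarrow> real \<Rightarrow> nat \<Rightarrow> nat" where
  "nxt p q j = (LEAST i. j \<le> i \<and> ok p q i)"

lemma nxt: assumes "p > 0" shows "j \<le> nxt p q j \<and> ok p q (nxt p q j)"
proof -
  have "\<exists>i. j \<le> i \<and> ok p q i" using ex_pos[of "p/2" j] assms by (auto simp: ok_def)
  then show ?thesis unfolding nxt_def by (rule LeastI_ex)
qed

lemma nxt_le: "j \<le> i \<Longrightarrow> ok p q i \<Longrightarrow> nxt p q j \<le> i"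
  unfolding nxt_def by (rule Least_le) simp

context
  fixes P Q :: real
  assumes P0: "P > 0" and Q0: "Q > 0"
begin

fun st :: "nat \<Rightarrow> nat \<times> real \<times> real" where
  "st 0 = (0, P, Q)"
| "st (Suc n) = (case st n of (j, p, q) \<Rightarrow>
      (Suc (nxt p q j), p - max (x (nxt p q j)) 0, q + min (x (nxt p q j)) 0))"

definition "J n = fst (st n)"
definition "pp n = fst (snd (st n))"
definition "qq n = snd (snd (st n))"
definition "kk n = nxt (pp n) (qq n) (J n)"

lemma st0: "J 0 = 0" "pp 0 = P" "qq 0 = Q"
  by (simp_all add: J_def pp_def qq_def)

lemma stS: "J (Suc n) = Suc (kk n)" "pp (Suc n) = pp n - max (x (kk n)) 0"
  "qq (Suc n) = qq n + min (x (kk n)) 0"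
  by (cases "st n"; simp add: J_def pp_def qq_def kk_def)+

lemma pos: "pp n > 0 \<and> qq n > 0"
proof (induction n)
  case 0 then show ?case using P0 Q0 by (simp add: st0)
next
  case (Suc n)
  then have "ok (pp n) (qq n) (kk n)" using nxt[of "pp n" "J n" "qq n"] by (simp add: kk_def)
  then show ?case using Suc by (auto simp: stS ok_def)
qed

lemma kk_prop: "J n \<le> kk n" "ok (pp n) (qq n) (kk n)"
  using nxt[of "pp n" "J n" "qq n"] pos[of n] by (auto simp: kk_def)

lemma halves: "max (x (kk n)) 0 \<le> pp n / 2" "- min (x (kk n)) 0 \<le> qq n / 2"
  using kk_prop(2)[of n] pos[of n] by (auto simp: ok_def)

lemma kk_mono: "strict_mono kk"
proof (rule strict_mono_Suc_iff[THEN iffD2], intro allI)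
  fix n show "kk n < kk (Suc n)" using kk_prop(1)[of "Suc n"] by (simp add: stS)
qed

lemma psum: "(\<Sum>i<n. max (x (kk i)) 0) = P - pp n" "(\<Sum>i<n. min (x (kk i)) 0) = qq n - Q"
  by (induction n) (simp_all add: st0 stS)

lemma in_range: assumes "\<And>n. ok (pp n) (qq n) i" shows "i \<in> range kk"
proof -
  have ex: "\<exists>n. i \<le> kk n" using seq_suble[OF kk_mono, of i] by blast
  define n where "n = (LEAST n. i \<le> kk n)"
  have n1: "i \<le> kk n" unfolding n_def by (rule LeastI_ex[OF ex])
  have n2: "J n \<le> i"
  proof (cases n)
    case 0 then show ?thesis by (simp add: st0)
  next
    case (Suc m)
    have "\<not> i \<le> kk m" using not_less_Least[of m "\<lambda>n. i \<le> kk n"] Suc n_def by simp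
    then show ?thesis using Suc by (simp add: stS)
  qed
  have "kk n \<le> i" unfolding kk_def by (rule nxt_le[OF n2 assms])
  with n1 show ?thesis by (metis le_antisym rangeI)
qed


lemma pp_lim: "pp \<longlonglongrightarrow> 0"
proof -
  let ?f = "\<lambda>i. max (x (kk i)) 0"
  have sf: "summable ?f"
  proof (rule bounded_imp_summable)
    fix n
    have "(\<Sum>k\<le>n. ?f k) = P - pp (Suc n)" using psum(1)[of "Suc n"] by (simp add: lessThan_Suc_atMost)
    then show "(\<Sum>k\<le>n. ?f k) \<le> P" using pos[of "Suc n"] by simp
  qed simp
  define L where "L = P - suminf ?f"
  have ppe: "pp = (\<lambda>n. P - (\<Sum>i<n. ?f i))" using psum(1) by (auto simp: fun_eq_iff)
  have lim: "pp \<longlonglongrightarrow> L" unfolding ppe L_def by (intro tendsto_intros summable_LIMSEQ sf)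
  have ge: "L \<le> pp n" for n
    using sum_le_suminf[OF sf, of "{..<n}"] psum(1)[of n] by (simp add: L_def)
  have L0: "0 \<le> L" using LIMSEQ_le_const[OF lim, of 0] pos by (auto simp: less_imp_le)
  have "\<not> L > 0"
  proof
    assume Lp: "L > 0"
    obtain M where M: "\<forall>i\<ge>M. \<bar>x i\<bar> < L/2" using x_small[of "L/2"] Lp by auto
    have "summable (\<lambda>i. max (x i) 0)"
    proof (rule sub_bound[OF kk_mono, of _ M P])
      fix i assume i: "M \<le> i" "max (x i) 0 \<noteq> 0"
      show "i \<in> range kk"
      proof (rule in_range)
        fix n show "ok (pp n) (qq n) i" using M i ge[of n] by (auto simp: ok_def)
      qed
    next
      fix N show "(\<Sum>n<N. max (x (kk n)) 0) \<le> P" using psum(1)[of N] pos[of N] by simp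
    qed simp
    then have "summable (\<lambda>i. 2 * max (x i) 0 - x i)" by (intro summable_diff summable_mult x_sum)
    moreover have "(\<lambda>i. 2 * max (x i) 0 - x i) = (\<lambda>i. \<bar>x i\<bar>)" by (auto simp: fun_eq_iff)
    ultimately show False using nsx by simp
  qed
  with L0 have "L = 0" by simp
  with lim show ?thesis by simp
qed

lemma qq_lim: "qq \<longlonglongrightarrow> 0"
proof -
  let ?f = "\<lambda>i. - min (x (kk i)) 0"
  have ps: "(\<Sum>i<n. ?f i) = Q - qq n" for n using psum(2)[of n] by (simp add: sum_negf)
  have sf: "summable ?f"
  proof (rule bounded_imp_summable)
    fix n
    have "(\<Sum>k\<le>n. ?f k) = Q - qq (Suc n)" using ps[of "Suc n"] by (simp add: lessThan_Suc_atMost)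
    then show "(\<Sum>k\<le>n. ?f k) \<le> Q" using pos[of "Suc n"] by simp
  qed simp
  define L where "L = Q - suminf ?f"
  have qqe: "qq = (\<lambda>n. Q - (\<Sum>i<n. ?f i))" using ps by (auto simp: fun_eq_iff)
  have lim: "qq \<longlonglongrightarrow> L" unfolding qqe L_def by (intro tendsto_intros summable_LIMSEQ sf)
  have ge: "L \<le> qq n" for n
    using sum_le_suminf[OF sf, of "{..<n}"] ps[of n] by (simp add: L_def)
  have L0: "0 \<le> L" using LIMSEQ_le_const[OF lim, of 0] pos by (auto simp: less_imp_le)
  have "\<not> L > 0"
  proof
    assume Lp: "L > 0"
    obtain M where M: "\<forall>i\<ge>M. \<bar>x i\<bar> < L/2" using x_small[of "L/2"] Lp by auto
    have "summable (\<lambda>i. max (- x i) 0)"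
    proof (rule sub_bound[OF kk_mono, of _ M Q])
      fix i assume i: "M \<le> i" "max (- x i) 0 \<noteq> 0"
      show "i \<in> range kk"
      proof (rule in_range)
        fix n show "ok (pp n) (qq n) i" using M i ge[of n] by (auto simp: ok_def)
      qed
    next
      fix N
      have "(\<Sum>n<N. max (- x (kk n)) 0) = (\<Sum>i<N. - min (x (kk i)) 0)"
        by (rule sum.cong) auto
      then show "(\<Sum>n<N. max (- x (kk n)) 0) \<le> Q" using ps[of N] pos[of N] by simp
    qed simp
    then have "summable (\<lambda>i. 2 * max (- x i) 0 + x i)" by (intro summable_add summable_mult x_sum)
    moreover have "(\<lambda>i. 2 * max (- x i) 0 + x i) = (\<lambda>i. \<bar>x i\<bar>)" by (auto simp: fun_eq_iff)
    ultimately show False using nsx by simp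
  qed
  with L0 have "L = 0" by simp
  with lim show ?thesis by simp
qed


lemma construct: "\<exists>k. strict_mono k \<and> (\<lambda>n. max (x (k n)) 0) sums P \<and> (\<lambda>n. min (x (k n)) 0) sums (-Q)
   \<and> (\<forall>n. \<bar>x (k n)\<bar> \<le> (\<Sum>m. \<bar>x (k (m + Suc n))\<bar>))"
proof (intro exI conjI allI)
  show "strict_mono kk" by (rule kk_mono)
  have "(\<lambda>n. P - pp n) \<longlonglongrightarrow> P - 0" by (intro tendsto_intros pp_lim)
  then show sP: "(\<lambda>n. max (x (kk n)) 0) sums P" unfolding sums_def psum by simp
  have "(\<lambda>n. qq n - Q) \<longlonglongrightarrow> 0 - Q" by (intro tendsto_intros qq_lim)
  then show sQ: "(\<lambda>n. min (x (kk n)) 0) sums (-Q)" unfolding sums_def psum by simp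
  have "(\<lambda>n. max (x (kk n)) 0 - min (x (kk n)) 0) sums (P - (-Q))" by (rule sums_diff[OF sP sQ])
  moreover have "(\<lambda>n. max (x (kk n)) 0 - min (x (kk n)) 0) = (\<lambda>n. \<bar>x (kk n)\<bar>)" by (auto simp: fun_eq_iff)
  ultimately have sa: "summable (\<lambda>n. \<bar>x (kk n)\<bar>)" by (auto simp: sums_iff)
  fix n
  have sa': "(\<lambda>m. \<bar>x (kk (m + Suc n))\<bar>) sums (\<Sum>m. \<bar>x (kk (m + Suc n))\<bar>)"
    using summable_ignore_initial_segment[OF sa, of "Suc n"] by (simp add: summable_sums)
  have t1: "(\<lambda>m. max (x (kk (m + Suc n))) 0) sums pp (Suc n)"
    using sums_split_initial_segment[OF sP, of "Suc n"] psum(1)[of "Suc n"] by simp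
  have t2: "(\<lambda>m. - min (x (kk (m + Suc n))) 0) sums qq (Suc n)"
    using sums_minus[OF sums_split_initial_segment[OF sQ, of "Suc n"]] psum(2)[of "Suc n"] by simp
  have a1: "pp (Suc n) \<le> (\<Sum>m. \<bar>x (kk (m + Suc n))\<bar>)" by (rule sums_le[OF _ t1 sa']) auto
  have a2: "qq (Suc n) \<le> (\<Sum>m. \<bar>x (kk (m + Suc n))\<bar>)" by (rule sums_le[OF _ t2 sa']) auto
  show "\<bar>x (kk n)\<bar> \<le> (\<Sum>m. \<bar>x (kk (m + Suc n))\<bar>)"
  proof (cases "0 \<le> x (kk n)")
    case True
    then show ?thesis using a1 halves(1)[of n] stS(2)[of n] by auto
  next
    case False
    then show ?thesis using a2 halves(2)[of n] stS(3)[of n] by auto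
  qed
qed

end
end

theorem mainTheorem1:
  fixes x :: "nat \<Rightarrow> real" and a b :: real
  assumes "conditionally_convergent x" and "a < b"
  shows "\<exists>k :: nat \<Rightarrow> nat. strict_mono k \<and> summable (\<lambda>n. \<bar>x (k n)\<bar>)
           \<and> {a..b} \<subseteq> achievement_set (\<lambda>n. x (k n))"
proof -
  have "\<exists>k. strict_mono k \<and> (\<lambda>n. max (x (k n)) 0) sums (\<bar>b\<bar> + 1) \<and> (\<lambda>n. min (x (k n)) 0) sums (-(\<bar>a\<bar> + 1))
   \<and> (\<forall>n. \<bar>x (k n)\<bar> \<le> (\<Sum>m. \<bar>x (k (m + Suc n))\<bar>))"
    by (rule construct[OF assms(1)]) auto
  then obtain k where k: "strict_mono k" and sP: "(\<lambda>n. max (x (k n)) 0) sums (\<bar>b\<bar> + 1)"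
    and sQ: "(\<lambda>n. min (x (k n)) 0) sums (-(\<bar>a\<bar> + 1))"
    and K: "\<And>n. \<bar>x (k n)\<bar> \<le> (\<Sum>m. \<bar>x (k (m + Suc n))\<bar>)"
    by blast
  have "(\<lambda>n. max (x (k n)) 0 - min (x (k n)) 0) sums ((\<bar>b\<bar> + 1) - (-(\<bar>a\<bar> + 1)))" by (rule sums_diff[OF sP sQ])
  moreover have "(\<lambda>n. max (x (k n)) 0 - min (x (k n)) 0) = (\<lambda>n. \<bar>x (k n)\<bar>)" by (auto simp: fun_eq_iff)
  ultimately have sa: "summable (\<lambda>n. \<bar>x (k n)\<bar>)" by (auto simp: sums_iff)
  have "{a..b} \<subseteq> achievement_set (\<lambda>n. x (k n))"
  proof
    fix t assume t: "t \<in> {a..b}"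
    show "t \<in> achievement_set (\<lambda>n. x (k n))"
      by (rule signdec[OF K sP sQ]) (use t in auto)
  qed
  with k sa show ?thesis by blast
qed

end
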